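(* Let $n\ge2$ and let $E$ be a non-empty subset of $\bar\Delta^{(n)}$. There exists a generalized $n$-system $\mathbf{P}$ on $[1,\infty)$ such that, for each $j=1,\dots,n$, \[ \liminf_{q\to\infty}\psi_j\big(q^{-1}\mathbf{P}(q)\big)=\inf\psi_j(E)\quad\text{and}\quad \limsup_{q\to\infty}\psi_j\big(q^{-1}\mathbf{P}(q)\big)=\frac{j}{n}. \]
   Context: $\bar\Delta^{(n)}=\{(a_1,\dots,a_n)\in\mathbb{R}^n: 0\le a_1\le\cdots\le a_n,\ a_1+\cdots+a_n=1\}$; for $j=1,\dots,n$, $\psi_j\colon\bar\Delta^{(n)}\to\mathbb{R}$ is $\psi_j(a_1,\dots,a_n)=a_1+\cdots+a_j$. A map $\mathbf{P}\colon I\to\mathbb{R}^n$ on an interval $I\subseteq[0,\infty)$ with non-empty interior is continuous piecewise linear if it is continuous, the set of points of $I$ where it is not differentiable (including endpoints of $I$ lying in $I$) is discrete in $I$, and its derivative is locally constant off that set. A generalized $n$-system on $I$ is a continuous piecewise linear map $\mathbf{P}=(P_1,\dots,P_n)\colon I\to\mathbb{R}^n$ such that: (G1) for each $q\in I$, $0\le P_1(q)\le\cdots\le P_n(q)$ and $P_1(q)+\cdots+P_n(q)=q$; (G2) on each non-empty open subinterval $H$ of $I$ on which $\mathbf{P}$ is differentiable, there are integers $1\le \underline{r}\le\overline{r}\le n$ such that $P_{\underline r},\dots,P_{\overline r}$ coincide on $H$ and have slope $1/(\overline r-\underline r+1)$, while every other $P_j$ is constant on $H$; (G3) if $q$ is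 an interior point of $I$ where $\mathbf{P}$ is not differentiable, and $\underline r,\overline r,\underline s,\overline s$ are the integers with $P_j'(q^-)=1/(\overline r-\underline r+1)$ for $\underline r\le j\le\overline r$ and $P_j'(q^+)=1/(\overline s-\underline s+1)$ for $\underline s\le j\le \overline s$, and if $\underline r<\overline s$, then $P_{\underline r}(q)=\cdots=P_{\overline s}(q)$. *)

theory Defs
  imports "HOL-Analysis.Analysis"
begin

text \<open>Points of R^n are encoded as functions nat => real, coordinates indexed by 1..n,
  vanishing outside {1..n}. A map P : I -> R^n is encoded as P :: nat => real => real,
  where P j q is the j-th coordinate of P(q).\<close>

definition closedDelta :: "nat \<Rightarrow> (nat \<Rightarrow> real) set" where
  "closedDelta n = {a. (\<forall>i. i \<notin> {1..n} \<longrightarrow> a i = 0) \<and> 0 \<le> a 1 \<and>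
      (\<forall>i. 1 \<le> i \<and> i < n \<longrightarrow> a i \<le> a (Suc i)) \<and> (\<Sum>i=1..n. a i) = 1}"

definition psi :: "nat \<Rightarrow> (nat \<Rightarrow> real) \<Rightarrow> real" where
  "psi j a = (\<Sum>i=1..j. a i)"

definition nondiff_pts :: "nat \<Rightarrow> real set \<Rightarrow> (nat \<Rightarrow> real \<Rightarrow> real) \<Rightarrow> real set" where
  "nondiff_pts n I P = {q \<in> I. q \<notin> interior I \<or> \<not> (\<forall>j\<in>{1..n}. P j differentiable (at q))}"

definition cont_pw_linear :: "nat \<Rightarrow> real set \<Rightarrow> (nat \<Rightarrow> real \<Rightarrow> real) \<Rightarrow> bool" where
  "cont_pw_linear n I P \<longleftrightarrow>
     (\<forall>j\<in>{1..n}. continuous_on I (P j)) \<and>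
     (\<forall>q\<in>I. \<exists>e>0. \<forall>x\<in>nondiff_pts n I P. x \<noteq> q \<longrightarrow> e \<le> \<bar>x - q\<bar>) \<and>
     (\<forall>q\<in>I - nondiff_pts n I P. \<exists>e>0. \<forall>x. \<bar>x - q\<bar> < e \<longrightarrow>
         x \<in> I - nondiff_pts n I P \<and> (\<forall>j\<in>{1..n}. deriv (P j) x = deriv (P j) q))"

definition gen_n_system :: "nat \<Rightarrow> real set \<Rightarrow> (nat \<Rightarrow> real \<Rightarrow> real) \<Rightarrow> bool" where
  "gen_n_system n I P \<longleftrightarrow>
     cont_pw_linear n I P \<and>
     \<comment> \<open>(G1)\<close>
     (\<forall>q\<in>I. 0 \<le> P 1 q \<and> (\<forall>j. 1 \<le> j \<and> j < n \<longrightarrow> P j q \<le> P (Suc j) q) \<and>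
        (\<Sum>j=1..n. P j q) = q) \<and>
     \<comment> \<open>(G2)\<close>
     (\<forall>H. H \<noteq> {} \<and> open H \<and> is_interval H \<and> H \<subseteq> I \<and>
          (\<forall>x\<in>H. \<forall>j\<in>{1..n}. P j differentiable (at x)) \<longrightarrow>
        (\<exists>rl rh. 1 \<le> rl \<and> rl \<le> rh \<and> rh \<le> n \<and>
           (\<forall>j\<in>{rl..rh}. \<forall>x\<in>H. P j x = P rl x \<and>
               (P j has_real_derivative 1 / real (rh - rl + 1)) (at x)) \<and>
           (\<forall>j\<in>{1..n} - {rl..rh}. \<forall>x\<in>H. \<forall>y\<in>H. P j x = P j y))) \<and>
     \<comment> \<open>(G3)\<close>
     (\<forall>q\<in>interior I. \<not> (\<forall>j\<in>{1..n}. P j differentiable (at q)) \<longrightarrow>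
        (\<forall>rl rh sl sh. 1 \<le> rl \<and> rl \<le> rh \<and> rh \<le> n \<and> 1 \<le> sl \<and> sl \<le> sh \<and> sh \<le> n \<and>
           (\<forall>j\<in>{1..n}. (P j has_real_derivative
               (if j \<in> {rl..rh} then 1 / real (rh - rl + 1) else 0)) (at q within {..q})) \<and>
           (\<forall>j\<in>{1..n}. (P j has_real_derivative
               (if j \<in> {sl..sh} then 1 / real (sh - sl + 1) else 0)) (at q within {q..})) \<and>
           rl < sh \<longrightarrow> (\<forall>j\<in>{rl..sh}. P j q = P rl q)))"

end

theory Submission
  imports Defs
begin


definition slope :: "nat \<Rightarrow> nat \<Rightarrow> nat \<Rightarrow> real" where
  "slope l h i = (if i \<in> {l..h} then 1 / real (h - l + 1) else 0)"

lemma sum_if_const_nat: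
  "(\<Sum>i\<in>A. (if i \<in> S then c else 0)) = c * real (card (A \<inter> S))" if "finite A" for c :: real
  using that by (simp add: sum.If_cases Int_commute)

lemma sum_slope_part:
  assumes "1 \<le> l" "l \<le> h"
  shows "(\<Sum>i=1..j. slope l h i) = real (card ({1..j} \<inter> {l..h})) / real (h - l + 1)"
  unfolding slope_def by (subst sum_if_const_nat) auto

lemma card_int_ivl: "{1..j} \<inter> {l..h} = {max 1 l..min j h}" for j l h :: nat
  by auto

lemma sum_slope:
  assumes "1 \<le> l" "l \<le> h" "h \<le> n"
  shows "(\<Sum>i=1..n. slope l h i) = 1"
proof -
  have "{1..n} \<inter> {l..h} = {l..h}" using assms by auto
  then have "(\<Sum>i=1..n. slope l h i) = real (card {l..h}) / real (h - l + 1)"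
    using sum_slope_part[of l h n] assms by simp
  then show ?thesis using assms by simp
qed

lemma slope_pos: "i \<in> {l..h} \<Longrightarrow> slope l h i > 0"
  by (simp add: slope_def)

lemma slope_zero: "i \<notin> {l..h} \<Longrightarrow> slope l h i = 0"
  by (simp add: slope_def)

lemma slope_determines:
  assumes "1 \<le> l" "l \<le> h" "h \<le> n" "1 \<le> l'" "l' \<le> h'" "h' \<le> n"
    and eq: "\<forall>i\<in>{1..n}. slope l h i = slope l' h' i"
  shows "l = l' \<and> h = h'"
proof (rule ccontr)
  assume ne: "\<not> (l = l' \<and> h = h')"
  have "\<exists>i\<in>{1..n}. (i \<in> {l..h}) \<noteq> (i \<in> {l'..h'})"
  proof (cases "l = l'")
    case True
    then have "h \<noteq> h'" using ne by auto
    then show ?thesis using True assms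
      by (intro bexI[of _ "max h h'"]) auto
  next
    case False
    then show ?thesis using assms
      by (intro bexI[of _ "min l l'"]) auto
  qed
  then obtain i where i: "i \<in> {1..n}" "(i \<in> {l..h}) \<noteq> (i \<in> {l'..h'})" by blast
  have e: "slope l h i = slope l' h' i" using eq i(1) by blast
  show False
  proof (cases "i \<in> {l..h}")
    case True
    then have "i \<notin> {l'..h'}" using i(2) by blast
    then show False using e slope_pos[OF True] slope_zero by simp
  next
    case False
    then have "i \<in> {l'..h'}" using i(2) by blast
    then show False using e slope_pos[of i l' h'] slope_zero[OF False] by simp
  qed
qed

lemma sorted_le:
  assumes mono: "\<forall>i. 1 \<le> i \<and> i < n \<longrightarrow> a i \<le> (a (Suc i) :: real)"
  shows "1 \<le> i \<Longrightarrow> i \<le> k \<Longrightarrow> k \<le> n \<Longrightarrow> a i \<le> a k"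
proof (induction k)
  case 0 then show ?case by simp
next
  case (Suc k)
  show ?case
  proof (cases "i = Suc k")
    case True then show ?thesis by simp
  next
    case False
    then have "a i \<le> a k" using Suc by simp
    also have "a k \<le> a (Suc k)" using Suc False mono by simp
    finally show ?thesis .
  qed
qed

lemma sorted_avg:
  assumes mono: "\<And>i. 1 \<le> i \<Longrightarrow> i < n \<Longrightarrow> a i \<le> (a (Suc i) :: real)"
    and "j \<le> n"
  shows "real n * (\<Sum>i=1..j. a i) \<le> real j * (\<Sum>i=1..n. a i)"
proof (cases "j = 0")
  case True then show ?thesis by simp
next
  case False
  have le: "\<And>i k. 1 \<le> i \<Longrightarrow> i \<le> k \<Longrightarrow> k \<le> n \<Longrightarrow> a i \<le> a k"
  proof -
    have m: "\<forall>i. 1 \<le> i \<and> i < n \<longrightarrow> a i \<le> a (Suc i)" using mono by simp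
    fix i k assume "1 \<le> i" "i \<le> k" "k \<le> n"
    then show "a i \<le> a k" using sorted_le[OF m] by simp
  qed
  have s1: "(\<Sum>i=1..j. a i) \<le> real j * a j"
  proof -
    have "(\<Sum>i=1..j. a i) \<le> (\<Sum>i=1..j. a j)"
      using le assms(2) by (intro sum_mono) simp
    then show ?thesis by simp
  qed
  have s2: "real (n - j) * a j \<le> (\<Sum>i=Suc j..n. a i)"
  proof -
    have "(\<Sum>i=Suc j..n. a j) \<le> (\<Sum>i=Suc j..n. a i)"
      using le assms(2) False by (intro sum_mono) simp
    then show ?thesis by simp
  qed
  have split: "(\<Sum>i=1..n. a i) = (\<Sum>i=1..j. a i) + (\<Sum>i=Suc j..n. a i)"
  proof -
    have "{1..n} = {1..j} \<union> {Suc j..n}" using assms(2) by auto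
    moreover have "(\<Sum>i\<in>{1..j} \<union> {Suc j..n}. a i) = (\<Sum>i=1..j. a i) + (\<Sum>i=Suc j..n. a i)"
      by (rule sum.union_disjoint) auto
    ultimately show ?thesis by simp
  qed
  have rn: "real n = real j + real (n - j)" using assms(2) by simp
  have "real n * (\<Sum>i=1..j. a i) = (real j + real (n - j)) * (\<Sum>i=1..j. a i)"
    by (subst rn) (rule refl)
  also have "\<dots> = real j * (\<Sum>i=1..j. a i) + real (n - j) * (\<Sum>i=1..j. a i)"
    by (rule distrib_right)
  also have "\<dots> \<le> real j * (\<Sum>i=1..j. a i) + real (n - j) * (real j * a j)"
    using s1 by (intro add_left_mono mult_left_mono) auto
  also have "\<dots> = real j * (\<Sum>i=1..j. a i) + real j * (real (n - j) * a j)" by simp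
  also have "\<dots> \<le> real j * (\<Sum>i=1..j. a i) + real j * (\<Sum>i=Suc j..n. a i)"
    using s2 by (intro add_left_mono mult_left_mono) auto
  also have "\<dots> = real j * (\<Sum>i=1..n. a i)" unfolding split by (rule distrib_left[symmetric])
  finally show ?thesis .
qed

lemma deriv_uniq_within:
  fixes f :: "real \<Rightarrow> real"
  assumes "at x within S \<noteq> bot"
    "(f has_real_derivative a) (at x within S)" "(f has_real_derivative b) (at x within S)"
  shows "a = b"
  using vector_derivative_unique_within[OF assms(1)] assms(2,3)
  by (simp add: has_real_derivative_iff_has_vector_derivative)

lemma at_left_closed_nonbot: "at (x::real) within {..x} \<noteq> bot"
proof -
  have "{..x} - {x} = {..<x}" by auto
  then show ?thesis by (subst at_within_eq_bot_iff) simp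
qed

lemma at_right_closed_nonbot: "at (x::real) within {x..} \<noteq> bot"
proof -
  have "{x..} - {x} = {x<..}" by auto
  then show ?thesis by (subst at_within_eq_bot_iff) simp
qed


locale pws =
  fixes n :: nat and rl rh :: "nat \<Rightarrow> nat" and B :: "nat \<Rightarrow> nat \<Rightarrow> real"
  assumes n2: "n \<ge> 2"
  and blk: "\<And>m. 1 \<le> rl m \<and> rl m \<le> rh m \<and> rh m \<le> n"
  and dist: "\<And>m. (rl m, rh m) \<noteq> (rl (Suc m), rh (Suc m))"
  and nonneg: "\<And>m. 0 \<le> B m 1"
  and sortd: "\<And>m i. 1 \<le> i \<Longrightarrow> i < n \<Longrightarrow> B m i \<le> B m (Suc i)"
  and step: "\<And>m. \<exists>d>0. \<forall>i\<in>{1..n}. B (Suc m) i = B m i + d * slope (rl m) (rh m) i"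
  and start: "(\<Sum>i=1..n. B 0 i) = 1"
  and unb: "\<And>x. \<exists>m. x \<le> (\<Sum>i=1..n. B m i)"
  and beq: "\<And>m j. j \<in> {rl m..rh m} \<Longrightarrow> B m j = B m (rl m)"
  and g3: "\<And>m j. rl m < rh (Suc m) \<Longrightarrow> j \<in> {rl m..rh (Suc m)} \<Longrightarrow> B (Suc m) j = B (Suc m) (rl m)"
begin

definition tau :: "nat \<Rightarrow> real" where "tau m = (\<Sum>i=1..n. B m i)"
definition s :: "nat \<Rightarrow> nat \<Rightarrow> real" where "s m i = slope (rl m) (rh m) i"
definition idx :: "real \<Rightarrow> nat" where "idx q = (LEAST m. q < tau (Suc m))"
definition P :: "nat \<Rightarrow> real \<Rightarrow> real" where
  "P j q = B (idx q) j + (q - tau (idx q)) * s (idx q) j"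
definition L :: "nat \<Rightarrow> nat \<Rightarrow> real \<Rightarrow> real" where
  "L m j y = B m j + (y - tau m) * s m j"

lemma sum_s: "(\<Sum>i=1..n. s m i) = 1"
  unfolding s_def using blk[of m] by (intro sum_slope) auto

lemma stepd: "tau m < tau (Suc m) \<and> (\<forall>i\<in>{1..n}. B (Suc m) i = B m i + (tau (Suc m) - tau m) * s m i)"
proof -
  obtain d where d: "d > 0" "\<forall>i\<in>{1..n}. B (Suc m) i = B m i + d * s m i"
    using step[of m] unfolding s_def by blast
  have "tau (Suc m) = (\<Sum>i=1..n. B m i + d * s m i)" unfolding tau_def using d(2) by (intro sum.cong) auto
  also have "\<dots> = tau m + d * (\<Sum>i=1..n. s m i)" unfolding tau_def by (simp add: sum.distrib sum_distrib_left)
  also have "\<dots> = tau m + d" using sum_s by simp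
  finally show ?thesis using d by auto
qed

lemma tau_smono: "strict_mono tau"
  using stepd by (intro strict_monoI_Suc) auto

lemma tau_less: "k < l \<Longrightarrow> tau k < tau l"
  using tau_smono by (simp add: strict_mono_less)

lemma tau_le: "k \<le> l \<Longrightarrow> tau k \<le> tau l"
  using tau_smono by (simp add: strict_mono_less_eq)

lemma tau0: "tau 0 = 1" using start by (simp add: tau_def)

lemma tau_ge1: "tau m \<ge> 1" using tau_le[of 0 m] tau0 by simp

lemma ex_above: "\<exists>m. q < tau (Suc m)"
proof -
  obtain m where "q + 1 \<le> tau m" using unb[of "q+1"] unfolding tau_def by blast
  then have "q < tau (Suc m)" using tau_less[of m "Suc m"] by simp
  then show ?thesis by blast
qed

lemma idx_above: "q < tau (Suc (idx q))"
  unfolding idx_def using ex_above by (rule LeastI_ex)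

lemma idx_below: "idx q > 0 \<Longrightarrow> tau (idx q) \<le> q"
proof -
  assume "idx q > 0"
  then obtain k where k: "idx q = Suc k" by (cases "idx q") auto
  have "\<not> q < tau (Suc k)"
  proof
    assume "q < tau (Suc k)"
    then have "idx q \<le> k" unfolding idx_def by (rule Least_le)
    then show False using k by simp
  qed
  then show ?thesis using k by simp
qed

lemma idx_below1: "1 \<le> q \<Longrightarrow> tau (idx q) \<le> q"
  using idx_below[of q] tau0 by (cases "idx q = 0") auto

lemma idx_eq: "tau m \<le> q \<Longrightarrow> q < tau (Suc m) \<Longrightarrow> idx q = m"
proof -
  assume a: "tau m \<le> q" "q < tau (Suc m)"
  have le: "idx q \<le> m" unfolding idx_def using a(2) by (rule Least_le)
  show "idx q = m"
  proof (rule ccontr)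
    assume "idx q \<noteq> m"
    then have "Suc (idx q) \<le> m" using le by simp
    then have "tau (Suc (idx q)) \<le> tau m" by (rule tau_le)
    then show False using idx_above[of q] a by simp
  qed
qed

lemma idx_mono_tau: "tau M \<le> q \<Longrightarrow> M \<le> idx q"
proof (rule ccontr)
  assume a: "tau M \<le> q" "\<not> M \<le> idx q"
  then have "Suc (idx q) \<le> M" by simp
  then have "tau (Suc (idx q)) \<le> tau M" by (rule tau_le)
  then show False using idx_above[of q] a by simp
qed

lemma piece: assumes "j \<in> {1..n}" "tau m \<le> y" "y \<le> tau (Suc m)"
  shows "P j y = L m j y"
proof (cases "y < tau (Suc m)")
  case True
  then have "idx y = m" using assms idx_eq by simp
  then show ?thesis unfolding P_def L_def by simp
next
  case False
  then have y: "y = tau (Suc m)" using assms by simp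
  then have "idx y = Suc m" using idx_eq[of "Suc m" y] tau_less[of "Suc m" "Suc (Suc m)"] by simp
  then show ?thesis unfolding P_def L_def using y stepd[of m] assms(1) by simp
qed

lemma piece0: assumes "j \<in> {1..n}" "y \<le> tau 1"
  shows "P j y = L 0 j y"
proof (cases "y < tau 1")
  case True
  then have "idx y = 0" unfolding idx_def by (intro Least_eq_0) simp
  then show ?thesis unfolding P_def L_def by simp
next
  case False
  then show ?thesis using piece[of j 0 y] assms tau0 tau_ge1[of 1] by simp
qed

lemma L_deriv: "(L m j has_real_derivative s m j) (at y within S)"
  unfolding L_def by (auto intro!: derivative_eq_intros)

lemma L_cont: "continuous_on S (L m j)"
  unfolding L_def by (intro continuous_intros)

lemma P_deriv_open: assumes "j \<in> {1..n}" "tau m < y" "y < tau (Suc m)"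
  shows "(P j has_real_derivative s m j) (at y)"
proof -
  have "(L m j has_real_derivative s m j) (at y)" by (rule L_deriv)
  then show ?thesis
    by (rule has_field_derivative_transform_within_open[where S="{tau m<..<tau (Suc m)}"])
       (use assms in \<open>auto intro!: piece[symmetric]\<close>)
qed

lemma P_deriv_left: assumes "j \<in> {1..n}"
  shows "(P j has_real_derivative s m j) (at (tau (Suc m)) within {..tau (Suc m)})"
proof -
  have "(L m j has_real_derivative s m j) (at (tau (Suc m)) within {..tau (Suc m)})" by (rule L_deriv)
  then show ?thesis
    by (rule has_field_derivative_transform_within[where d="tau (Suc m) - tau m"])
       (use assms stepd[of m] in \<open>auto simp: dist_real_def intro!: piece[symmetric]\<close>)
qed

lemma P_deriv_right: assumes "j \<in> {1..n}"
  shows "(P j has_real_derivative s m j) (at (tau m) within {tau m..})"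
proof -
  have "(L m j has_real_derivative s m j) (at (tau m) within {tau m..})" by (rule L_deriv)
  then show ?thesis
    by (rule has_field_derivative_transform_within[where d="tau (Suc m) - tau m"])
       (use assms stepd[of m] in \<open>auto simp: dist_real_def intro!: piece[symmetric]\<close>)
qed

lemma nondiff_break: "\<not> (\<forall>j\<in>{1..n}. P j differentiable (at (tau (Suc m))))"
proof
  assume d: "\<forall>j\<in>{1..n}. P j differentiable (at (tau (Suc m)))"
  have "\<forall>i\<in>{1..n}. slope (rl m) (rh m) i = slope (rl (Suc m)) (rh (Suc m)) i"
  proof
    fix i assume i: "i \<in> {1..n}"
    have "P i differentiable (at (tau (Suc m)))" using d i by blast
    then obtain D where D: "(P i has_real_derivative D) (at (tau (Suc m)))"
      by (auto simp: real_differentiable_def)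
    have "s m i = D"
      by (rule deriv_uniq_within[OF at_left_closed_nonbot P_deriv_left[OF i]])
         (rule has_field_derivative_at_within[OF D])
    moreover have "s (Suc m) i = D"
      by (rule deriv_uniq_within[OF at_right_closed_nonbot P_deriv_right[OF i]])
         (rule has_field_derivative_at_within[OF D])
    ultimately show "slope (rl m) (rh m) i = slope (rl (Suc m)) (rh (Suc m)) i" by (simp add: s_def)
  qed
  then have "rl m = rl (Suc m) \<and> rh m = rh (Suc m)"
    using blk[of m] blk[of "Suc m"] by (intro slope_determines[of _ _ n]) auto
  then show False using dist[of m] by simp
qed


lemma P_tau: "j \<in> {1..n} \<Longrightarrow> P j (tau m) = B m j"
  using piece[of j m "tau m"] tau_less[of m "Suc m"] by (simp add: L_def)

lemma P_cont_piece: "j \<in> {1..n} \<Longrightarrow> continuous_on {tau m..tau (Suc m)} (P j)"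
  using L_cont[of "{tau m..tau (Suc m)}" m j] by (rule continuous_on_cong[THEN iffD1, rotated 2]) (auto intro!: piece[symmetric])

lemma cont_interior_ivl:
  fixes f :: "real \<Rightarrow> real"
  shows "continuous_on {a..c} f \<Longrightarrow> a < x \<Longrightarrow> x < c \<Longrightarrow> isCont f x"
  by (rule continuous_on_interior) auto

lemma P_isCont: assumes j: "j \<in> {1..n}" and x: "1 \<le> x" shows "isCont (P j) x"
proof -
  define m where "m = idx x"
  have lo: "tau m \<le> x" using idx_below1[OF x] m_def by simp
  have hi: "x < tau (Suc m)" using idx_above m_def by simp
  show ?thesis
  proof (cases "tau m < x")
    case True
    show ?thesis using cont_interior_ivl[OF P_cont_piece[OF j] True hi] .
  next
    case False
    then have xe: "x = tau m" using lo by simp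
    show ?thesis
    proof (cases m)
      case 0
      have "continuous_on {x - 1..tau 1} (P j)"
        using L_cont[of "{x - 1..tau 1}" 0 j]
        by (rule continuous_on_cong[THEN iffD1, rotated 2]) (use j in \<open>auto intro!: piece0[symmetric]\<close>)
      then show ?thesis by (rule cont_interior_ivl) (use hi 0 in auto)
    next
      case (Suc k)
      have "continuous_on ({tau k..tau (Suc k)} \<union> {tau (Suc k)..tau (Suc (Suc k))}) (P j)"
        by (intro continuous_on_closed_Un P_cont_piece j) auto
      moreover have "{tau k..tau (Suc k)} \<union> {tau (Suc k)..tau (Suc (Suc k))} = {tau k..tau (Suc (Suc k))}"
        using tau_less[of k "Suc k"] tau_less[of "Suc k" "Suc (Suc k)"] by auto
      ultimately have "continuous_on {tau k..tau (Suc (Suc k))} (P j)" by simp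
      then show ?thesis by (rule cont_interior_ivl) (use xe Suc hi tau_less[of k "Suc k"] in auto)
    qed
  qed
qed

lemma P_diff_open: "tau m < y \<Longrightarrow> y < tau (Suc m) \<Longrightarrow> \<forall>j\<in>{1..n}. P j differentiable (at y)"
  using P_deriv_open by (meson atLeastAtMost_iff real_differentiable_def)

lemma interior_I: "interior {1::real..} = {1<..}" by simp

lemma nondiff_sub: assumes "q \<in> nondiff_pts n {1..} P" shows "\<exists>m. q = tau m"
proof -
  have q1: "1 \<le> q" using assms by (simp add: nondiff_pts_def)
  define m where "m = idx q"
  have lo: "tau m \<le> q" using idx_below1[OF q1] m_def by simp
  have hi: "q < tau (Suc m)" using idx_above m_def by simp
  show ?thesis
  proof (rule ccontr)
    assume ne: "\<nexists>m. q = tau m"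
    then have "tau m < q" using lo by (metis order_le_less)
    then have "\<forall>j\<in>{1..n}. P j differentiable (at q)" using P_diff_open hi by blast
    moreover have "q \<in> interior {1..}" using ne tau0 q1 by (metis interior_I greaterThan_iff order_le_less)
    ultimately show False using assms by (simp add: nondiff_pts_def)
  qed
qed

lemma G1: assumes q: "1 \<le> q"
  shows "0 \<le> P 1 q \<and> (\<forall>j. 1 \<le> j \<and> j < n \<longrightarrow> P j q \<le> P (Suc j) q) \<and> (\<Sum>j=1..n. P j q) = q"
proof -
  define m where "m = idx q"
  have lo: "tau m \<le> q" using idx_below1[OF q] m_def by simp
  have hi: "q < tau (Suc m)" using idx_above m_def by simp
  define d where "d = tau (Suc m) - tau m"
  have dpos: "d > 0" using stepd[of m] d_def by simp
  define lam where "lam = (q - tau m) / d"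
  have lam: "0 \<le> lam" "lam \<le> 1" using lo hi dpos by (auto simp: lam_def d_def)
  have conv: "P j q = (1 - lam) * B m j + lam * B (Suc m) j" if j: "j \<in> {1..n}" for j
  proof -
    have "P j q = B m j + (q - tau m) * s m j" using piece[OF j lo] hi by (simp add: L_def)
    also have "(q - tau m) = lam * d" using dpos by (simp add: lam_def)
    also have "B m j + lam * d * s m j = (1 - lam) * B m j + lam * (B m j + d * s m j)"
      by (simp add: algebra_simps)
    also have "B m j + d * s m j = B (Suc m) j" using stepd[of m] j by (simp add: d_def)
    finally show ?thesis .
  qed
  have n1: "1 \<in> {1..n}" using n2 by simp
  have a: "0 \<le> P 1 q" using conv[OF n1] lam nonneg[of m] nonneg[of "Suc m"] by simp
  have b: "P j q \<le> P (Suc j) q" if "1 \<le> j" "j < n" for j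
  proof -
    have "(1 - lam) * B m j + lam * B (Suc m) j \<le> (1 - lam) * B m (Suc j) + lam * B (Suc m) (Suc j)"
      using lam sortd[OF that, of m] sortd[OF that, of "Suc m"]
      by (intro add_mono mult_left_mono) auto
    then show ?thesis using conv[of j] conv[of "Suc j"] that by simp
  qed
  have c: "(\<Sum>j=1..n. P j q) = q"
  proof -
    have "(\<Sum>j=1..n. P j q) = (\<Sum>j=1..n. B m j + (q - tau m) * s m j)"
      using piece[OF _ lo] hi by (intro sum.cong) (auto simp: L_def)
    also have "\<dots> = tau m + (q - tau m) * (\<Sum>j=1..n. s m j)"
      by (simp add: sum.distrib sum_distrib_left tau_def)
    also have "\<dots> = q" using sum_s by simp
    finally show ?thesis .
  qed
  show ?thesis using a b c by blast
qed


lemma idx_split: assumes "1 \<le> q" "\<nexists>k. q = tau (Suc k)" "1 < q"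
  shows "tau (idx q) < q \<and> q < tau (Suc (idx q))"
proof -
  have lo: "tau (idx q) \<le> q" using idx_below1 assms by simp
  have "tau (idx q) \<noteq> q"
  proof (cases "idx q")
    case 0 then show ?thesis using tau0 assms by simp
  next
    case (Suc k) then show ?thesis using assms(2) by metis
  qed
  then show ?thesis using lo idx_above[of q] by simp
qed

lemma cpl: "cont_pw_linear n {1..} P"
  unfolding cont_pw_linear_def
proof (intro conjI ballI)
  fix j assume j: "j \<in> {1..n}"
  show "continuous_on {1..} (P j)"
    by (intro continuous_at_imp_continuous_on ballI P_isCont j) simp
next
  fix q :: real assume q: "q \<in> {1..}"
  define m where "m = idx q"
  have lo: "tau m \<le> q" using idx_below1 q m_def by simp
  have hi: "q < tau (Suc m)" using idx_above m_def by simp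
  define e where "e = min (tau (Suc m) - q) (if tau m = q then (if m = 0 then 1 else tau m - tau (m - 1)) else q - tau m)"
  have epos: "e > 0" using hi lo tau_less[of "m - 1" m] by (auto simp: e_def)
  have key: "e \<le> \<bar>tau k - q\<bar>" if "tau k \<noteq> q" for k
  proof (cases "m < k")
    case True
    then have "tau (Suc m) \<le> tau k" by (intro tau_le) simp
    then show ?thesis using hi by (auto simp: e_def)
  next
    case False
    show ?thesis
    proof (cases "k = m")
      case True then show ?thesis using that lo by (auto simp: e_def)
    next
      case False
      then have km: "k < m" using \<open>\<not> m < k\<close> by simp
      then have t1: "tau k \<le> tau (m - 1)" by (intro tau_le) simp
      have t2: "tau k < tau m" using km tau_less by simp
      show ?thesis using t1 t2 lo km by (auto simp: e_def)
    qed
  qed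
  show "\<exists>e>0. \<forall>x\<in>nondiff_pts n {1..} P. x \<noteq> q \<longrightarrow> e \<le> \<bar>x - q\<bar>"
    using epos key nondiff_sub by blast
next
  fix q assume q: "q \<in> {1..} - nondiff_pts n {1..} P"
  then have q1: "1 < q" and dq: "\<forall>j\<in>{1..n}. P j differentiable (at q)"
    by (auto simp: nondiff_pts_def)
  have nb: "\<nexists>k. q = tau (Suc k)" using dq nondiff_break by blast
  define m where "m = idx q"
  have lh: "tau m < q" "q < tau (Suc m)" using idx_split[OF _ nb q1] q1 m_def by auto
  define e where "e = min (q - tau m) (tau (Suc m) - q)"
  have epos: "e > 0" using lh by (simp add: e_def)
  show "\<exists>e>0. \<forall>x. \<bar>x - q\<bar> < e \<longrightarrow> x \<in> {1..} - nondiff_pts n {1..} P \<and>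
         (\<forall>j\<in>{1..n}. deriv (P j) x = deriv (P j) q)"
  proof (intro exI[of _ e] conjI epos allI impI)
    fix x assume x: "\<bar>x - q\<bar> < e"
    have xl: "tau m < x" "x < tau (Suc m)" using x by (auto simp: e_def abs_less_iff)
    have x1: "1 < x" using xl tau_ge1[of m] by simp
    show "x \<in> {1..} - nondiff_pts n {1..} P"
      using x1 P_diff_open[OF xl] by (auto simp: nondiff_pts_def)
    show "\<forall>j\<in>{1..n}. deriv (P j) x = deriv (P j) q"
    proof
      fix j assume j: "j \<in> {1..n}"
      have "deriv (P j) x = s m j" using P_deriv_open[OF j xl] by (rule DERIV_imp_deriv)
      moreover have "deriv (P j) q = s m j" using P_deriv_open[OF j lh] by (rule DERIV_imp_deriv)
      ultimately show "deriv (P j) x = deriv (P j) q" by simp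
    qed
  qed
qed

lemma G2: assumes H: "H \<noteq> {}" "open H" "is_interval H" "H \<subseteq> {1..}"
    and dH: "\<forall>x\<in>H. \<forall>j\<in>{1..n}. P j differentiable (at x)"
  shows "\<exists>rl rh. 1 \<le> rl \<and> rl \<le> rh \<and> rh \<le> n \<and>
           (\<forall>j\<in>{rl..rh}. \<forall>x\<in>H. P j x = P rl x \<and>
               (P j has_real_derivative 1 / real (rh - rl + 1)) (at x)) \<and>
           (\<forall>j\<in>{1..n} - {rl..rh}. \<forall>x\<in>H. \<forall>y\<in>H. P j x = P j y)"
proof -
  have Hint: "H \<subseteq> {1<..}" using interior_maximal[OF H(4) H(2)] by simp
  obtain x where x: "x \<in> H" using H(1) by blast
  have notau: "tau k \<notin> H" for k
  proof (cases k)
    case 0 then show ?thesis using Hint tau0 by auto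
  next
    case (Suc k') then show ?thesis using dH nondiff_break by blast
  qed
  define m where "m = idx x"
  have lh: "tau m < x" "x < tau (Suc m)"
    using idx_split[of x] Hint x notau m_def by auto
  have inH: "tau m < y \<and> y < tau (Suc m)" if y: "y \<in> H" for y
  proof (rule ccontr)
    assume "\<not> (tau m < y \<and> y < tau (Suc m))"
    then have "tau m \<in> H \<or> tau (Suc m) \<in> H"
      using H(3) x y lh unfolding is_interval_1 by (meson less_le_not_le linorder_le_less_linear)
    then show False using notau by blast
  qed
  have Pv: "P j y = B m j + (y - tau m) * s m j" if "j \<in> {1..n}" "y \<in> H" for j y
    using piece[OF that(1)] inH[OF that(2)] by (simp add: L_def)
  have c2: "\<forall>j\<in>{rl m..rh m}. \<forall>y\<in>H. P j y = P (rl m) y \<and>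
               (P j has_real_derivative 1 / real (rh m - rl m + 1)) (at y)"
  proof (intro ballI)
    fix j y assume j: "j \<in> {rl m..rh m}" and y: "y \<in> H"
    have j1: "j \<in> {1..n}" "rl m \<in> {1..n}" using j blk[of m] by auto
    have ss: "s m j = 1 / real (rh m - rl m + 1)" using j by (simp add: s_def slope_def)
    have ss': "s m (rl m) = 1 / real (rh m - rl m + 1)" using blk[of m] by (simp add: s_def slope_def)
    have "P j y = P (rl m) y" using Pv[OF j1(1) y] Pv[OF j1(2) y] beq[OF j] ss ss' by simp
    moreover have "(P j has_real_derivative 1 / real (rh m - rl m + 1)) (at y)"
      using P_deriv_open[OF j1(1) conjunct1[OF inH[OF y]] conjunct2[OF inH[OF y]]] ss by simp
    ultimately show "P j y = P (rl m) y \<and> (P j has_real_derivative 1 / real (rh m - rl m + 1)) (at y)" ..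
  qed
  have c3: "\<forall>j\<in>{1..n} - {rl m..rh m}. \<forall>y\<in>H. \<forall>z\<in>H. P j y = P j z"
  proof (intro ballI)
    fix j y z assume j: "j \<in> {1..n} - {rl m..rh m}" and y: "y \<in> H" and z: "z \<in> H"
    have "s m j = 0" using j by (simp add: s_def slope_def)
    then show "P j y = P j z" using Pv[of j y] Pv[of j z] j y z by simp
  qed
  show ?thesis using blk[of m] c2 c3 by blast
qed

lemma G3: assumes q: "q \<in> interior {1..}" and nd: "\<not> (\<forall>j\<in>{1..n}. P j differentiable (at q))"
  and b: "1 \<le> rl' \<and> rl' \<le> rh' \<and> rh' \<le> n \<and> 1 \<le> sl' \<and> sl' \<le> sh' \<and> sh' \<le> n"
  and dl: "\<forall>j\<in>{1..n}. (P j has_real_derivative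
               (if j \<in> {rl'..rh'} then 1 / real (rh' - rl' + 1) else 0)) (at q within {..q})"
  and dr: "\<forall>j\<in>{1..n}. (P j has_real_derivative
               (if j \<in> {sl'..sh'} then 1 / real (sh' - sl' + 1) else 0)) (at q within {q..})"
  and lt: "rl' < sh'"
  shows "\<forall>j\<in>{rl'..sh'}. P j q = P rl' q"
proof -
  have q1: "1 < q" using q by simp
  obtain k where k: "q = tau (Suc k)"
  proof (rule ccontr)
    assume "\<not> thesis"
    then have nb: "\<nexists>k. q = tau (Suc k)" using that by blast
    have "tau (idx q) < q \<and> q < tau (Suc (idx q))" using idx_split[OF _ nb q1] q1 by simp
    then show False using P_diff_open nd by blast
  qed
  have e1: "\<forall>i\<in>{1..n}. slope rl' rh' i = slope (rl k) (rh k) i"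
  proof
    fix i assume i: "i \<in> {1..n}"
    show "slope rl' rh' i = slope (rl k) (rh k) i"
      using deriv_uniq_within[OF at_left_closed_nonbot dl[rule_format, OF i] P_deriv_left[OF i, of k, folded k]]
      by (simp add: slope_def s_def)
  qed
  have e2: "\<forall>i\<in>{1..n}. slope sl' sh' i = slope (rl (Suc k)) (rh (Suc k)) i"
  proof
    fix i assume i: "i \<in> {1..n}"
    show "slope sl' sh' i = slope (rl (Suc k)) (rh (Suc k)) i"
      using deriv_uniq_within[OF at_right_closed_nonbot dr[rule_format, OF i] P_deriv_right[OF i, of "Suc k", folded k]]
      by (simp add: slope_def s_def)
  qed
  have r: "rl' = rl k" "rh' = rh k" using slope_determines[OF _ _ _ _ _ _ e1] b blk[of k] by auto
  have t: "sl' = rl (Suc k)" "sh' = rh (Suc k)" using slope_determines[OF _ _ _ _ _ _ e2] b blk[of "Suc k"] by auto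
  show ?thesis
  proof
    fix j assume j: "j \<in> {rl'..sh'}"
    have j1: "j \<in> {1..n}" "rl' \<in> {1..n}" using j b by auto
    show "P j q = P rl' q"
      using g3[of k j] lt j r t P_tau[OF j1(1), of "Suc k"] P_tau[OF j1(2), of "Suc k"] k by simp
  qed
qed

theorem gen: "gen_n_system n {1..} P"
proof -
  have a: "\<forall>q\<in>{1..}. 0 \<le> P 1 q \<and> (\<forall>j. 1 \<le> j \<and> j < n \<longrightarrow> P j q \<le> P (Suc j) q) \<and> (\<Sum>j=1..n. P j q) = q"
    using G1 by simp
  have b: "\<forall>H. H \<noteq> {} \<and> open H \<and> is_interval H \<and> H \<subseteq> {1..} \<and>
          (\<forall>x\<in>H. \<forall>j\<in>{1..n}. P j differentiable (at x)) \<longrightarrow>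
        (\<exists>rl rh. 1 \<le> rl \<and> rl \<le> rh \<and> rh \<le> n \<and>
           (\<forall>j\<in>{rl..rh}. \<forall>x\<in>H. P j x = P rl x \<and>
               (P j has_real_derivative 1 / real (rh - rl + 1)) (at x)) \<and>
           (\<forall>j\<in>{1..n} - {rl..rh}. \<forall>x\<in>H. \<forall>y\<in>H. P j x = P j y))"
    using G2 by blast
  have c: "\<forall>q\<in>interior {1..}. \<not> (\<forall>j\<in>{1..n}. P j differentiable (at q)) \<longrightarrow>
        (\<forall>rl rh sl sh. 1 \<le> rl \<and> rl \<le> rh \<and> rh \<le> n \<and> 1 \<le> sl \<and> sl \<le> sh \<and> sh \<le> n \<and>
           (\<forall>j\<in>{1..n}. (P j has_real_derivative
               (if j \<in> {rl..rh} then 1 / real (rh - rl + 1) else 0)) (at q within {..q})) \<and>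
           (\<forall>j\<in>{1..n}. (P j has_real_derivative
               (if j \<in> {sl..sh} then 1 / real (sh - sl + 1) else 0)) (at q within {q..})) \<and>
           rl < sh \<longrightarrow> (\<forall>j\<in>{rl..sh}. P j q = P rl q))"
  proof (intro ballI impI allI)
    fix q rl' rh' sl' sh' j assume h: "q \<in> interior {1::real..}" "\<not> (\<forall>j\<in>{1..n}. P j differentiable (at q))"
    "1 \<le> rl' \<and> rl' \<le> rh' \<and> rh' \<le> n \<and> 1 \<le> sl' \<and> sl' \<le> sh' \<and> sh' \<le> n \<and>
           (\<forall>j\<in>{1..n}. (P j has_real_derivative
               (if j \<in> {rl'..rh'} then 1 / real (rh' - rl' + 1) else 0)) (at q within {..q})) \<and>
           (\<forall>j\<in>{1..n}. (P j has_real_derivative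
               (if j \<in> {sl'..sh'} then 1 / real (sh' - sl' + 1) else 0)) (at q within {q..})) \<and>
           rl' < sh'" "j \<in> {rl'..sh'}"
    have G3': "\<lbrakk>1 \<le> rl' \<and> rl' \<le> rh' \<and> rh' \<le> n \<and> 1 \<le> sl' \<and> sl' \<le> sh' \<and> sh' \<le> n;
           (\<forall>j\<in>{1..n}. (P j has_real_derivative
               (if j \<in> {rl'..rh'} then 1 / real (rh' - rl' + 1) else 0)) (at q within {..q}));
           (\<forall>j\<in>{1..n}. (P j has_real_derivative
               (if j \<in> {sl'..sh'} then 1 / real (sh' - sl' + 1) else 0)) (at q within {q..}));
           rl' < sh'\<rbrakk> \<Longrightarrow> \<forall>j\<in>{rl'..sh'}. P j q = P rl' q"
      by (rule G3[OF h(1) h(2)])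
    have "\<forall>j\<in>{rl'..sh'}. P j q = P rl' q"
      apply (rule G3')
      using h(3) apply blast
      using h(3) apply blast
      using h(3) apply blast
      using h(3) apply blast
      done
    then show "P j q = P rl' q" using h(4) by blast
  qed
  show ?thesis unfolding gen_n_system_def using cpl a b c by blast
qed

end


lemma ratio_le:
  fixes N T d sg :: real
  assumes "T > 0" "d > 0" "sg * T \<le> N"
  shows "(N + d * sg) / (T + d) \<le> N / T"
proof -
  have "(N + d * sg) * T \<le> N * (T + d)"
    using assms mult_left_mono[OF assms(3), of d] by (simp add: algebra_simps)
  then show ?thesis using assms by (simp add: divide_simps)
qed

lemma ratio_ge:
  fixes N T d sg :: real
  assumes "T > 0" "d > 0" "sg * T \<ge> N"
  shows "(N + d * sg) / (T + d) \<ge> N / T"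
proof -
  have "(N + d * sg) * T \<ge> N * (T + d)"
    using assms mult_left_mono[OF assms(3), of d] by (simp add: algebra_simps)
  then show ?thesis using assms by (simp add: divide_simps)
qed

lemma ratio_between:
  fixes N T d sg t :: real
  assumes "T > 0" "d > 0" "0 \<le> t" "t \<le> d"
  shows "(N + t * sg) / (T + t) \<ge> min (N / T) ((N + d * sg) / (T + d))"
proof (cases "sg * T \<ge> N")
  case True
  have "(N + t * sg) * T \<ge> N * (T + t)"
    using assms mult_left_mono[OF True, of t] by (simp add: algebra_simps)
  then have "(N + t * sg) / (T + t) \<ge> N / T" using assms by (simp add: divide_simps)
  then show ?thesis by simp
next
  case False
  have "(d - t) * (sg * T) \<le> (d - t) * N" using False assms by (intro mult_left_mono) auto
  then have "(N + t * sg) * (T + d) \<ge> (N + d * sg) * (T + t)"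
    by (simp add: algebra_simps)
  then have "(N + t * sg) / (T + t) \<ge> (N + d * sg) / (T + d)" using assms by (simp add: divide_simps)
  then show ?thesis by simp
qed

context pws begin

definition val :: "nat \<Rightarrow> nat \<Rightarrow> real" where "val j m = (\<Sum>i=1..j. B m i) / tau m"

lemma psi_P: "psi j (\<lambda>i. P i q / q) = (\<Sum>i=1..j. P i q) / q"
  unfolding psi_def by (simp add: sum_divide_distrib)

lemma psi_P_tau: "j \<le> n \<Longrightarrow> psi j (\<lambda>i. P i (tau m) / tau m) = val j m"
  unfolding psi_P val_def using P_tau by simp

lemma psi_upper: assumes "j \<le> n" "1 \<le> q" shows "psi j (\<lambda>i. P i q / q) \<le> real j / real n"
proof -
  have g: "(\<forall>j. 1 \<le> j \<and> j < n \<longrightarrow> P j q \<le> P (Suc j) q)" "(\<Sum>j=1..n. P j q) = q" using G1[OF assms(2)] by auto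
  have "real n * (\<Sum>i=1..j. P i q) \<le> real j * (\<Sum>i=1..n. P i q)"
    by (rule sorted_avg) (use g assms in auto)
  then have "real n * (\<Sum>i=1..j. P i q) \<le> real j * q" using g by simp
  moreover have "n > 0" using n2 by simp
  ultimately show ?thesis unfolding psi_P using assms by (simp add: divide_simps mult.commute)
qed

lemma val_upper: "j \<le> n \<Longrightarrow> val j m \<le> real j / real n"
  using psi_upper[of j "tau m"] tau_ge1[of m] psi_P_tau by simp

lemma val_step:
  assumes j: "j \<le> n"
  shows "val j (Suc m) = ((\<Sum>i=1..j. B m i) + (tau (Suc m) - tau m) * (\<Sum>i=1..j. s m i)) / (tau m + (tau (Suc m) - tau m))"
proof -
  have "(\<Sum>i=1..j. B (Suc m) i) = (\<Sum>i=1..j. B m i + (tau (Suc m) - tau m) * s m i)"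
    using stepd[of m] j by (intro sum.cong) auto
  then show ?thesis unfolding val_def by (simp add: sum.distrib sum_distrib_left)
qed

lemma val_dec:
  assumes j: "j \<le> n" and c: "(\<Sum>i=1..j. s m i) * tau m \<le> (\<Sum>i=1..j. B m i)"
  shows "val j (Suc m) \<le> val j m"
  unfolding val_step[OF j] using ratio_le[OF _ _ c, where d="tau (Suc m) - tau m"] tau_ge1[of m] stepd[of m] by (simp add: val_def)

lemma val_inc:
  assumes j: "j \<le> n" and c: "(\<Sum>i=1..j. s m i) * tau m \<ge> (\<Sum>i=1..j. B m i)"
  shows "val j (Suc m) \<ge> val j m"
  unfolding val_step[OF j] using ratio_ge[OF _ _ c, where d="tau (Suc m) - tau m"] tau_ge1[of m] stepd[of m] by (simp add: val_def)

lemma psi_between: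
  assumes j: "j \<le> n" and q: "tau m \<le> q" "q \<le> tau (Suc m)"
  shows "psi j (\<lambda>i. P i q / q) \<ge> min (val j m) (val j (Suc m))"
proof -
  have "(\<Sum>i=1..j. P i q) = (\<Sum>i=1..j. B m i + (q - tau m) * s m i)"
    using piece[OF _ q] j by (intro sum.cong) (auto simp: L_def)
  then have e: "psi j (\<lambda>i. P i q / q) = ((\<Sum>i=1..j. B m i) + (q - tau m) * (\<Sum>i=1..j. s m i)) / (tau m + (q - tau m))"
    unfolding psi_P by (simp add: sum.distrib sum_distrib_left)
  show ?thesis unfolding e val_step[OF j]
    using ratio_between[of "tau m" "tau (Suc m) - tau m" "q - tau m" "\<Sum>i=1..j. B m i" "\<Sum>i=1..j. s m i"]
      tau_ge1[of m] stepd[of m] q by (simp add: val_def)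
qed

lemma psi_lower_pieces:
  assumes j: "j \<le> n" and q: "1 \<le> q"
  shows "psi j (\<lambda>i. P i q / q) \<ge> min (val j (idx q)) (val j (Suc (idx q)))"
  using psi_between[OF j idx_below1[OF q]] idx_above[of q] by simp

end


lemma suc_dec:
  assumes "(N::nat) > 0"
  shows "Suc m div N = (if Suc (m mod N) < N then m div N else Suc (m div N))"
    "Suc m mod N = (if Suc (m mod N) < N then Suc (m mod N) else 0)"
proof -
  have p: "m mod N < N" using assms by simp
  show "Suc m mod N = (if Suc (m mod N) < N then Suc (m mod N) else 0)"
    using p by (auto simp: mod_Suc)
  then show "Suc m div N = (if Suc (m mod N) < N then m div N else Suc (m div N))"
    using p by (auto simp: div_Suc)
qed

locale constr =
  fixes n :: nat and a :: "nat \<Rightarrow> nat \<Rightarrow> real"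
  assumes n2: "n \<ge> 2" and aD: "\<And>k. a k \<in> closedDelta n"
begin

lemma a_out: "i \<notin> {1..n} \<Longrightarrow> a k i = 0" using aD[of k] by (simp add: closedDelta_def)
lemma a0: "a k 0 = 0" using a_out by simp
lemma a_sum: "(\<Sum>i=1..n. a k i) = 1" using aD[of k] by (simp add: closedDelta_def)

lemma a_mono: assumes "i \<le> i'" "i' \<le> n" shows "a k i \<le> a k i'"
proof -
  have m: "\<forall>i. 1 \<le> i \<and> i < n \<longrightarrow> a k i \<le> a k (Suc i)" using aD[of k] by (simp add: closedDelta_def)
  have a1: "0 \<le> a k 1" using aD[of k] by (simp add: closedDelta_def)
  show ?thesis
  proof (cases "i = 0")
    case True
    then show ?thesis
    proof (cases "i' = 0")
      case False
      then have "a k 1 \<le> a k i'" using sorted_le[OF m, of 1 i'] assms by simp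
      then show ?thesis using True a0 a1 by simp
    qed simp
  next
    case False
    then show ?thesis using sorted_le[OF m, of i i'] assms by simp
  qed
qed

lemma a_nonneg: "0 \<le> a k i"
proof (cases "i \<in> {1..n}")
  case True then show ?thesis using a_mono[of 0 i k] a0 by simp
qed (simp add: a_out)

lemma psi_a_le1: assumes "j \<le> n" shows "psi j (a k) \<le> 1"
proof -
  have "sum (a k) {1..j} \<le> sum (a k) {1..n}" by (rule sum_mono2) (use assms a_nonneg in auto)
  then show ?thesis unfolding psi_def using a_sum[of k] by simp
qed

lemma psi_a_ge0: "0 \<le> psi j (a k)"
  unfolding psi_def using a_nonneg by (simp add: sum_nonneg)

fun x :: "nat \<Rightarrow> real" where
  "x 0 = 1 / real n"
| "x (Suc k) = x k * (1 + real n + (real k + 1) * a k n)"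

lemma x_bounds: "x k \<ge> 1 / real n \<and> x k \<ge> real k"
proof (induction k)
  case 0 then show ?case by simp
next
  case (Suc k)
  have np: "real n > 0" using n2 by simp
  have "x k * (1 + real n) \<le> x (Suc k)"
    using Suc np a_nonneg[of k n] by (simp, intro mult_left_mono) (auto intro: order_trans[rotated])
  moreover have "x k * real n \<ge> 1" using Suc np by (simp add: divide_simps mult.commute)
  ultimately show ?case using Suc np by (simp add: algebra_simps)
qed

lemma x_pos: "x k > 0" using x_bounds[of k] n2
  by (metis divide_pos_pos less_le_trans of_nat_0_less_iff zero_less_one not_numeral_le_zero gr0I)

definition F :: "nat \<Rightarrow> nat \<Rightarrow> real" where
  "F k i = x k * (1 + real i + (real k + 1) * a k i)"

lemma F0: "F k 0 = x k" by (simp add: F_def a0)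
lemma Fn: "F k n = x (Suc k)" by (simp add: F_def)

lemma F_less: assumes "i < i'" "i' \<le> n" shows "F k i < F k i'"
proof -
  have h1: "(real k + 1) * a k i \<le> (real k + 1) * a k i'" using a_mono[of i i' k] assms by (intro mult_left_mono) auto
  have h2: "real i < real i'" using assms by simp
  have "1 + real i + (real k + 1) * a k i < 1 + real i' + (real k + 1) * a k i'" using h1 h2 by linarith
  then show ?thesis unfolding F_def using x_pos[of k] by simp
qed

lemma F_le: "i \<le> i' \<Longrightarrow> i' \<le> n \<Longrightarrow> F k i \<le> F k i'"
  using F_less[of i i' k] by (cases "i = i'") auto

lemma F_pos: "i \<le> n \<Longrightarrow> F k i > 0"
  using F_le[of 0 i k] F0 x_pos[of k] by simp

definition NN :: nat where "NN = 2 * n - 1"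
lemma NN_pos: "NN > 0" and n_lt_NN: "n < NN" using n2 by (auto simp: NN_def)

definition Bk :: "nat \<Rightarrow> nat \<Rightarrow> nat \<Rightarrow> real" where
  "Bk k p i = (if p < n then F k (min i p) else F k (max i (p - n + 1)))"
definition rlk :: "nat \<Rightarrow> nat" where "rlk p = (if p < n then p + 1 else 1)"
definition rhk :: "nat \<Rightarrow> nat" where "rhk p = (if p < n then n else p - n + 1)"

definition BB :: "nat \<Rightarrow> nat \<Rightarrow> real" where "BB m i = Bk (m div NN) (m mod NN) i"
definition rr :: "nat \<Rightarrow> nat" where "rr m = rlk (m mod NN)"
definition hh :: "nat \<Rightarrow> nat" where "hh m = rhk (m mod NN)"

lemma blk_k: "p < NN \<Longrightarrow> 1 \<le> rlk p \<and> rlk p \<le> rhk p \<and> rhk p \<le> n"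
  by (auto simp: rlk_def rhk_def NN_def)

lemma stepA: assumes "Suc p < NN"
  shows "\<exists>d>0. \<forall>i\<in>{1..n}. Bk k (Suc p) i = Bk k p i + d * slope (rlk p) (rhk p) i"
proof (cases "Suc p < n")
  case True
  define d where "d = real (n - p) * (F k (Suc p) - F k p)"
  have np: "real (n - p) > 0" using True by simp
  have dpos: "d > 0" unfolding d_def using F_less[of p "Suc p" k] True np by simp
  have e: "real (n - Suc p + 1) = real (n - p)" using True by simp
  show ?thesis
  proof (intro exI[of _ d] conjI dpos ballI)
    fix i assume i: "i \<in> {1..n}"
    show "Bk k (Suc p) i = Bk k p i + d * slope (rlk p) (rhk p) i"
    proof (cases "i \<le> p")
      case True
      then show ?thesis using \<open>Suc p < n\<close> by (simp add: Bk_def rlk_def rhk_def slope_def)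
    next
      case False
      then have "min i p = p" "min i (Suc p) = Suc p" by auto
      then show ?thesis using \<open>Suc p < n\<close> False i np e
        by (simp add: Bk_def rlk_def rhk_def slope_def d_def)
    qed
  qed
next
  case False
  show ?thesis
  proof (cases "Suc p = n")
    case True
    define d where "d = F k n - F k p"
    have dpos: "d > 0" unfolding d_def using F_less[of p n k] True by simp
    show ?thesis
    proof (intro exI[of _ d] conjI dpos ballI)
      fix i assume i: "i \<in> {1..n}"
      have r: "rlk p = n" "rhk p = n" using True by (auto simp: rlk_def rhk_def)
      have "max i 1 = i" using i by simp
      then have b1: "Bk k (Suc p) i = F k i" using True by (simp add: Bk_def)
      show "Bk k (Suc p) i = Bk k p i + d * slope (rlk p) (rhk p) i"
      proof (cases "i = n")
        case True
        then show ?thesis using b1 \<open>Suc p = n\<close> by (simp add: Bk_def r slope_def d_def)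
      next
        case False
        then have "i \<le> p" using i \<open>Suc p = n\<close> by simp
        then show ?thesis using b1 \<open>Suc p = n\<close> False by (simp add: Bk_def r slope_def)
      qed
    qed
  next
    case False
    then have pn: "n \<le> p" using \<open>\<not> Suc p < n\<close> by simp
    define r where "r = p - n + 1"
    have r1: "1 \<le> r" "Suc r < n" using pn assms by (auto simp: r_def NN_def)
    have sr: "Suc p - n + 1 = Suc r" using pn by (simp add: r_def)
    define d where "d = real r * (F k (Suc r) - F k r)"
    have dpos: "d > 0" unfolding d_def using F_less[of r "Suc r" k] r1 by simp
    have rl: "rlk p = 1" "rhk p = r" using pn by (auto simp: rlk_def rhk_def r_def)
    show ?thesis
    proof (intro exI[of _ d] conjI dpos ballI)
      fix i assume i: "i \<in> {1..n}"
      have b0: "Bk k p i = F k (max i r)" using pn by (simp add: Bk_def r_def)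
      have b1: "Bk k (Suc p) i = F k (max i (Suc r))" using pn sr by (simp add: Bk_def)
      show "Bk k (Suc p) i = Bk k p i + d * slope (rlk p) (rhk p) i"
      proof (cases "i \<le> r")
        case True
        then have "max i r = r" "max i (Suc r) = Suc r" by auto
        then show ?thesis using b0 b1 True i r1 by (simp add: rl slope_def d_def)
      next
        case False
        then have "max i r = i" "max i (Suc r) = i" by auto
        then show ?thesis using b0 b1 False by (simp add: rl slope_def)
      qed
    qed
  qed
qed

lemma stepB:
  shows "\<exists>d>0. \<forall>i\<in>{1..n}. Bk (Suc k) 0 i = Bk k (NN - 1) i + d * slope (rlk (NN - 1)) (rhk (NN - 1)) i"
proof -
  have p: "NN - 1 - n + 1 = n - 1" "\<not> NN - 1 < n" using n2 by (auto simp: NN_def)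
  have rl: "rlk (NN - Suc 0) = 1" "rhk (NN - Suc 0) = n - Suc 0" using p by (auto simp: rlk_def rhk_def)
  define d where "d = real (n - 1) * (F k n - F k (n - 1))"
  have dpos: "d > 0" unfolding d_def using F_less[of "n - 1" n k] n2 by simp
  show ?thesis
  proof (intro exI[of _ d] conjI dpos ballI)
    fix i assume i: "i \<in> {1..n}"
    have b0: "Bk k (NN - 1) i = F k (max i (n - 1))" using p by (simp add: Bk_def)
    have b1: "Bk (Suc k) 0 i = F k n" using n2 by (simp add: Bk_def F0 Fn)
    show "Bk (Suc k) 0 i = Bk k (NN - 1) i + d * slope (rlk (NN - 1)) (rhk (NN - 1)) i"
    proof (cases "i \<le> n - 1")
      case True
      then have "max i (n - 1) = n - 1" by auto
      then show ?thesis using b0 b1 True i n2 by (simp add: rl slope_def d_def)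
    next
      case False
      then have "i = n" using i by simp
      then show ?thesis using b0 b1 n2 by (simp add: rl slope_def max_def)
    qed
  qed
qed


lemma dist_k: "Suc p < NN \<Longrightarrow> (rlk p, rhk p) \<noteq> (rlk (Suc p), rhk (Suc p))"
  using n2 by (auto simp: rlk_def rhk_def NN_def)

lemma dist_last: "(rlk (NN - 1), rhk (NN - 1)) \<noteq> (rlk 0, rhk 0)"
  using n2 by (auto simp: rlk_def rhk_def NN_def)

lemma idx_le_n: "p < NN \<Longrightarrow> i \<le> n \<Longrightarrow> (if p < n then min i p else max i (p - n + 1)) \<le> n"
  by (auto simp: NN_def)

lemma Bk_F: "Bk k p i = F k (if p < n then min i p else max i (p - n + 1))"
  by (simp add: Bk_def)

lemma Bk_pos: "p < NN \<Longrightarrow> i \<le> n \<Longrightarrow> Bk k p i > 0"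
  unfolding Bk_F by (rule F_pos[OF idx_le_n])

lemma Bk_mono: assumes "p < NN" "i < n" shows "Bk k p i \<le> Bk k p (Suc i)"
  unfolding Bk_F
  by (rule F_le) (use assms in \<open>auto simp: NN_def\<close>)

lemma beq_k: assumes "p < NN" "j \<in> {rlk p..rhk p}" shows "Bk k p j = Bk k p (rlk p)"
  using assms by (auto simp: Bk_def rlk_def rhk_def min_def max_def)

lemma g3_k: assumes "Suc p < NN" "rlk p < rhk (Suc p)" "j \<in> {rlk p..rhk (Suc p)}"
  shows "Bk k (Suc p) j = Bk k (Suc p) (rlk p)"
proof (cases "Suc p < n")
  case True
  then show ?thesis using assms by (auto simp: Bk_def rlk_def rhk_def min_def)
next
  case False
  show ?thesis
  proof (cases "p < n")
    case True
    then have "Suc p = n" using False by simp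
    then show ?thesis using assms True by (auto simp: rlk_def rhk_def)
  next
    case False
    then show ?thesis using assms \<open>\<not> Suc p < n\<close> by (auto simp: Bk_def rlk_def rhk_def max_def)
  qed
qed

lemma BB_Suc: "BB (Suc m) i = (if Suc (m mod NN) < NN then Bk (m div NN) (Suc (m mod NN)) i else Bk (Suc (m div NN)) 0 i)"
  unfolding BB_def using suc_dec[OF NN_pos, of m] by simp

lemma rr_Suc: "rr (Suc m) = (if Suc (m mod NN) < NN then rlk (Suc (m mod NN)) else rlk 0)"
  unfolding rr_def using suc_dec[OF NN_pos, of m] by simp

lemma hh_Suc: "hh (Suc m) = (if Suc (m mod NN) < NN then rhk (Suc (m mod NN)) else rhk 0)"
  unfolding hh_def using suc_dec[OF NN_pos, of m] by simp

lemma last_p: "\<not> Suc (m mod NN) < NN \<Longrightarrow> m mod NN = NN - 1"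
  using NN_pos by (metis Suc_lessI mod_less_divisor diff_Suc_1)

lemma BB_epoch: "BB (k * NN) i = x k"
  unfolding BB_def using NN_pos n2 by (simp add: Bk_def F0)

lemma L_blk: "1 \<le> rr m \<and> rr m \<le> hh m \<and> hh m \<le> n"
    unfolding rr_def hh_def using blk_k NN_pos by simp

lemma L_dist: "(rr m, hh m) \<noteq> (rr (Suc m), hh (Suc m))"
  proof (cases "Suc (m mod NN) < NN")
    case True
    have e: "rr (Suc m) = rlk (Suc (m mod NN))" "hh (Suc m) = rhk (Suc (m mod NN))"
      using True by (simp_all only: rr_Suc hh_Suc if_True)
    show ?thesis unfolding e by (unfold rr_def hh_def) (rule dist_k[OF True])
  next
    case False
    have e: "rr (Suc m) = rlk 0" "hh (Suc m) = rhk 0"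
      using False by (simp_all only: rr_Suc hh_Suc if_False)
    show ?thesis unfolding e by (unfold rr_def hh_def last_p[OF False]) (rule dist_last)
  qed

lemma L_nonneg: "0 \<le> BB m 1"
    unfolding BB_def using Bk_pos[of "m mod NN" 1] NN_pos n2 by (simp add: less_imp_le)

lemma L_sortd: "1 \<le> i \<Longrightarrow> i < n \<Longrightarrow> BB m i \<le> BB m (Suc i)"
    unfolding BB_def using Bk_mono NN_pos by simp

lemma L_step: "\<exists>d>0. \<forall>i\<in>{1..n}. BB (Suc m) i = BB m i + d * slope (rr m) (hh m) i"
  proof (cases "Suc (m mod NN) < NN")
    case True
    have e: "\<And>i. BB (Suc m) i = Bk (m div NN) (Suc (m mod NN)) i"
      using True by (simp only: BB_Suc if_True)
    show ?thesis unfolding e by (unfold BB_def rr_def hh_def) (rule stepA[OF True])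
  next
    case False
    have e: "\<And>i. BB (Suc m) i = Bk (Suc (m div NN)) 0 i"
      using False by (simp only: BB_Suc if_False)
    show ?thesis unfolding e by (unfold BB_def rr_def hh_def last_p[OF False]) (rule stepB)
  qed

lemma L_start: "(\<Sum>i=1..n. BB 0 i) = 1"
proof -
  have "BB 0 i = x 0" for i using BB_epoch[of 0] by simp
  then have "(\<Sum>i=1..n. BB 0 i) = (\<Sum>i=1..n. x 0)" by simp
  also have "\<dots> = 1" using n2 by simp
  finally show "(\<Sum>i=1..n. BB 0 i) = 1" .
qed

lemma L_unb: "\<exists>m. X \<le> (\<Sum>i=1..n. BB m i)"
proof -
  obtain k :: nat where k: "X \<le> real k" using real_arch_simple by blast
  have "(\<Sum>i=1..n. BB (k * NN) i) = real n * x k" using BB_epoch by simp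
  also have "\<dots> \<ge> 1 * x k" using x_pos[of k] n2 by (intro mult_right_mono) auto
  finally have "x k \<le> (\<Sum>i=1..n. BB (k * NN) i)" by simp
  then have "X \<le> (\<Sum>i=1..n. BB (k * NN) i)" using x_bounds[of k] k by linarith
  then show "\<exists>m. X \<le> (\<Sum>i=1..n. BB m i)" by blast
qed

lemma L_beq: assumes "j \<in> {rr m..hh m}" shows "BB m j = BB m (rr m)"
  unfolding BB_def rr_def by (rule beq_k) (use NN_pos assms in \<open>simp_all add: rr_def hh_def\<close>)

lemma L_g3: assumes a1: "rr m < hh (Suc m)" and a2: "j \<in> {rr m..hh (Suc m)}"
  shows "BB (Suc m) j = BB (Suc m) (rr m)"
  proof (cases "Suc (m mod NN) < NN")
    case True
    have e: "\<And>i. BB (Suc m) i = Bk (m div NN) (Suc (m mod NN)) i" "hh (Suc m) = rhk (Suc (m mod NN))"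
      using True by (simp_all only: BB_Suc hh_Suc if_True)
    have b1: "rlk (m mod NN) < rhk (Suc (m mod NN))" using a1 unfolding e(2) rr_def .
    have b2: "j \<in> {rlk (m mod NN)..rhk (Suc (m mod NN))}" using a2 unfolding e(2) rr_def .
    show ?thesis unfolding e(1) rr_def by (rule g3_k[OF True b1 b2])
  next
    case False
    have e: "\<And>i. BB (Suc m) i = Bk (Suc (m div NN)) 0 i"
      using False by (simp only: BB_Suc if_False)
    show ?thesis unfolding e using n2 by (simp add: Bk_def)
  qed

lemma pws_ok: "pws n rr hh BB"
  apply unfold_locales
  apply (rule n2)
  apply (rule L_blk)
  apply (rule L_dist)
  apply (rule L_nonneg)
  apply (erule (1) L_sortd)
  apply (rule L_step)
  apply (rule L_start)
  apply (rule L_unb)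
  apply (erule L_beq)
  apply (erule (1) L_g3)
  done

sublocale pws n rr hh BB by (rule pws_ok)

end


lemma bnd_low:
  fixes K C psi Aj :: real
  assumes "K > 0" "C \<ge> 0" "0 \<le> psi" "psi \<le> 1" "0 \<le> Aj"
  shows "psi - C / K \<le> (Aj + K * psi) / (C + K)"
proof -
  have "(psi - C / K) * (C + K) = psi * K + C * (psi - 1) - C * C / K"
    using assms by (simp add: field_simps)
  also have "\<dots> \<le> psi * K"
  proof -
    have "C * (psi - 1) \<le> 0" using assms by (simp add: mult_nonneg_nonpos)
    moreover have "C * C / K \<ge> 0" using assms by simp
    ultimately show ?thesis by linarith
  qed
  also have "\<dots> \<le> Aj + K * psi" using assms by simp
  finally show ?thesis using assms by (simp add: le_divide_eq)
qed

lemma bnd_up: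
  fixes K C psi Aj :: real
  assumes "K > 0" "Aj \<le> C" "0 \<le> Aj" "0 \<le> psi"
  shows "(Aj + K * psi) / (C + K) \<le> psi + C / K"
proof -
  have "(psi + C / K) * (C + K) = K * psi + C + psi * C + C * C / K"
    using assms by (simp add: field_simps)
  also have "\<dots> \<ge> Aj + K * psi"
  proof -
    have "psi * C \<ge> 0" using assms by simp
    moreover have "C * C / K \<ge> 0" using assms by simp
    ultimately show ?thesis using assms by linarith
  qed
  finally show ?thesis using assms by (simp add: divide_le_eq)
qed

context constr begin

lemma kp_div: "p < NN \<Longrightarrow> (k * NN + p) div NN = k" using NN_pos by simp
lemma kp_mod: "p < NN \<Longrightarrow> (k * NN + p) mod NN = p" using NN_pos by simp

lemma BB_kp: "p < NN \<Longrightarrow> BB (k * NN + p) i = Bk k p i"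
  unfolding BB_def using kp_div kp_mod by simp

lemma s_kp: "p < NN \<Longrightarrow> s (k * NN + p) i = slope (rlk p) (rhk p) i"
  unfolding s_def rr_def hh_def using kp_mod by simp

lemma val_epoch: assumes "j \<le> n" shows "val j (k * NN) = real j / real n"
proof -
  have "(\<Sum>i=1..j. BB (k * NN) i) = real j * x k" using BB_epoch by simp
  moreover have "tau (k * NN) = real n * x k" unfolding tau_def using BB_epoch by simp
  ultimately show ?thesis unfolding val_def using x_pos[of k] by simp
qed

lemma tau_epoch: "tau (k * NN) \<ge> real k"
proof -
  have "tau (k * NN) = real n * x k" unfolding tau_def using BB_epoch by simp
  also have "\<dots> \<ge> 1 * x k" using x_pos[of k] n2 by (intro mult_right_mono) auto
  finally show ?thesis using x_bounds[of k] by simp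
qed

lemma fwd_ineq:
  assumes p: "p < n" and j: "j \<le> n"
  shows "(\<Sum>i=1..j. slope (p + 1) n i) * (\<Sum>i=1..n. F k (min i p)) \<le> (\<Sum>i=1..j. F k (min i p))"
proof (cases "j \<le> p")
  case True
  have "(\<Sum>i=1..j. slope (p + 1) n i) = 0" using True by (intro sum.neutral) (auto simp: slope_def)
  moreover have "0 \<le> (\<Sum>i=1..j. F k (min i p))" using F_pos p by (intro sum_nonneg) (simp add: less_imp_le)
  ultimately show ?thesis by simp
next
  case False
  define u where "u = F k p"
  have upos: "u > 0" using F_pos p by (simp add: u_def)
  have sg: "(\<Sum>i=1..j. slope (p + 1) n i) = real (j - p) / real (n - p)"
  proof -
    have "{1..j} \<inter> {p + 1..n} = {p + 1..j}" using False j by auto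
    moreover have "min j n = j" using j by simp
    ultimately show ?thesis using sum_slope_part[of "p + 1" n j] p by simp
  qed
  define N where "N = (\<Sum>i=1..j. F k (min i p))"
  have split: "(\<Sum>i=1..n. F k (min i p)) = N + (\<Sum>i=Suc j..n. F k (min i p))"
  proof -
    have "{1..n} = {1..j} \<union> {Suc j..n}" using j by auto
    moreover have "(\<Sum>i\<in>{1..j} \<union> {Suc j..n}. F k (min i p)) = N + (\<Sum>i=Suc j..n. F k (min i p))"
      unfolding N_def by (rule sum.union_disjoint) auto
    ultimately show ?thesis by simp
  qed
  have top: "(\<Sum>i=Suc j..n. F k (min i p)) = real (n - j) * u"
  proof -
    have "(\<Sum>i=Suc j..n. F k (min i p)) = (\<Sum>i=Suc j..n. u)"
      using False by (intro sum.cong) (auto simp: u_def min_def)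
    then show ?thesis by simp
  qed
  have Nge: "real (j - p) * u \<le> N"
  proof -
    have "{1..j} = {1..p} \<union> {Suc p..j}" using False by auto
    then have "N = (\<Sum>i=1..p. F k (min i p)) + (\<Sum>i=Suc p..j. F k (min i p))"
      unfolding N_def by (simp add: sum.union_disjoint)
    moreover have "(\<Sum>i=Suc p..j. F k (min i p)) = (\<Sum>i=Suc p..j. u)"
      by (intro sum.cong) (auto simp: u_def min_def)
    moreover have "0 \<le> (\<Sum>i=1..p. F k (min i p))" using F_pos p by (intro sum_nonneg) (simp add: less_imp_le)
    ultimately show ?thesis by (simp add: u_def)
  qed
  have rn: "real (n - p) = real (j - p) + real (n - j)" using False j by simp
  have np: "real (n - p) > 0" using p by simp
  have "real (j - p) * (N + real (n - j) * u) \<le> real (n - p) * N"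
  proof -
    have "real (n - j) * (real (j - p) * u) \<le> real (n - j) * N" using Nge by (intro mult_left_mono) auto
    then show ?thesis unfolding rn by (simp add: algebra_simps)
  qed
  then have "real (j - p) / real (n - p) * (N + real (n - j) * u) \<le> N"
    using np by (simp add: divide_simps mult.commute)
  then show ?thesis unfolding sg split top N_def .
qed

lemma val_fwd: assumes j: "j \<le> n" and p: "p < n"
  shows "val j (Suc (k * NN + p)) \<le> val j (k * NN + p)"
proof (rule val_dec[OF j])
  have pN: "p < NN" using p n_lt_NN by simp
  have e1: "s (k * NN + p) i = slope (p + 1) n i" for i using s_kp[OF pN] p by (simp add: rlk_def rhk_def)
  have e2: "BB (k * NN + p) i = F k (min i p)" for i using BB_kp[OF pN] p by (simp add: Bk_def)
  show "(\<Sum>i=1..j. s (k * NN + p) i) * tau (k * NN + p) \<le> (\<Sum>i=1..j. BB (k * NN + p) i)"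
    unfolding tau_def e1 e2 by (rule fwd_ineq[OF p j])
qed

lemma ret_sg: assumes "1 \<le> r" "r \<le> n" "j \<le> n"
  shows "real j / real n \<le> (\<Sum>i=1..j. slope 1 r i)"
proof -
  have "{1..j} \<inter> {1..r} = {1..min j r}" by auto
  then have e: "(\<Sum>i=1..j. slope 1 r i) = real (min j r) / real r"
    using sum_slope_part[of 1 r j] assms by simp
  show ?thesis
  proof (cases "j \<le> r")
    case True
    then show ?thesis unfolding e using assms by (simp add: frac_le)
  next
    case False
    then show ?thesis unfolding e using assms by simp
  qed
qed

lemma val_ret: assumes j: "j \<le> n" and p: "n \<le> p" "p < NN"
  shows "val j (k * NN + p) \<le> val j (Suc (k * NN + p))"
proof (rule val_inc[OF j])
  define m where "m = k * NN + p"
  have r: "rlk p = 1" "1 \<le> rhk p" "rhk p \<le> n" using p blk_k[of p] by (auto simp: rlk_def)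
  have e1: "s m i = slope 1 (rhk p) i" for i using s_kp[OF p(2)] r by (simp add: m_def)
  have sg: "real j / real n \<le> (\<Sum>i=1..j. s m i)" unfolding e1 by (rule ret_sg[OF r(2,3) j])
  have vu: "val j m \<le> real j / real n" by (rule val_upper[OF j])
  have tpos: "tau m > 0" using tau_ge1[of m] by simp
  have "(\<Sum>i=1..j. BB m i) \<le> real j / real n * tau m"
    using vu tpos n2 unfolding val_def by (simp add: divide_simps)
  also have "\<dots> \<le> (\<Sum>i=1..j. s m i) * tau m" using sg tpos by (intro mult_right_mono) auto
  finally show "(\<Sum>i=1..j. BB (k * NN + p) i) \<le> (\<Sum>i=1..j. s (k * NN + p) i) * tau (k * NN + p)"
    by (simp add: m_def)
qed

lemma val_ge_F: assumes j: "j \<le> n" and p: "p < NN"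
  shows "val j (k * NN + n) \<le> val j (k * NN + p)"
proof (cases "p \<le> n")
  case True
  show ?thesis using True
  proof (induction p rule: inc_induct)
    case base then show ?case by simp
  next
    case (step q)
    have "val j (Suc (k * NN + q)) \<le> val j (k * NN + q)" using val_fwd[OF j step.hyps(2)] .
    then show ?case using step.IH by simp
  qed
next
  case False
  have "n \<le> p" using False by simp
  then show ?thesis using p
  proof (induction p rule: dec_induct)
    case base then show ?case by simp
  next
    case (step q)
    have "val j (k * NN + q) \<le> val j (Suc (k * NN + q))" using val_ret[OF j step.hyps(1)] step.prems by simp
    then show ?case using step.IH step.prems by simp
  qed
qed

lemma val_Suc_ge_F: assumes j: "j \<le> n" and p: "p < NN"
  shows "val j (k * NN + n) \<le> val j (Suc (k * NN + p))"
proof (cases "p < n")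
  case True
  then have "Suc p < NN" using n_lt_NN by simp
  then show ?thesis using val_ge_F[OF j, of "Suc p" k] by simp
next
  case False
  then show ?thesis using val_ge_F[OF j p, of k] val_ret[OF j _ p, of k] by simp
qed

lemma psi_ge_F: assumes j: "j \<le> n" and q: "1 \<le> q"
  shows "psi j (\<lambda>i. P i q / q) \<ge> val j ((idx q div NN) * NN + n)"
proof -
  define m where "m = idx q"
  have m: "m = (m div NN) * NN + m mod NN" by simp
  have pm: "m mod NN < NN" using NN_pos by simp
  have "val j ((m div NN) * NN + n) \<le> val j m" using val_ge_F[OF j pm, of "m div NN"] m by metis
  moreover have "val j ((m div NN) * NN + n) \<le> val j (Suc m)" using val_Suc_ge_F[OF j pm, of "m div NN"] m by metis
  ultimately show ?thesis using psi_lower_pieces[OF j q] unfolding m_def by simp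
qed


definition A :: "nat \<Rightarrow> real" where "A j = (\<Sum>i=1..j. 1 + real i)"

lemma A_nonneg: "0 \<le> A j" unfolding A_def by (intro sum_nonneg) auto
lemma A_mono: "j \<le> j' \<Longrightarrow> A j \<le> A j'"
  unfolding A_def by (intro sum_mono2) auto

lemma sumF: "(\<Sum>i=1..j. F k i) = x k * (A j + (real k + 1) * psi j (a k))"
  unfolding F_def A_def psi_def by (simp add: sum_distrib_left sum.distrib algebra_simps)

lemma valF_eq: assumes j: "j \<le> n"
  shows "val j (k * NN + n) = (A j + (real k + 1) * psi j (a k)) / (A n + (real k + 1))"
proof -
  have e: "BB (k * NN + n) i = F k i" if "1 \<le> i" for i
  proof -
    have "max i 1 = i" using that by simp
    then show ?thesis using BB_kp[OF n_lt_NN] by (simp add: Bk_def)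
  qed
  have s1: "(\<Sum>i=1..j. BB (k * NN + n) i) = (\<Sum>i=1..j. F k i)" using e by simp
  have s2: "tau (k * NN + n) = (\<Sum>i=1..n. F k i)" unfolding tau_def using e by simp
  have p1: "psi n (a k) = 1" using a_sum by (simp add: psi_def)
  show ?thesis unfolding val_def s1 s2 sumF p1 using x_pos[of k] by simp
qed

lemma psi_low:
  assumes j: "j \<le> n" and q: "1 \<le> q"
  shows "psi j (\<lambda>i. P i q / q) \<ge> psi j (a (idx q div NN)) - A n / (real (idx q div NN) + 1)"
proof -
  define k where "k = idx q div NN"
  have "psi j (a k) - A n / (real k + 1) \<le> (A j + (real k + 1) * psi j (a k)) / (A n + (real k + 1))"
    by (rule bnd_low) (use A_nonneg psi_a_ge0 psi_a_le1[OF j] in auto)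
  also have "\<dots> = val j (k * NN + n)" using valF_eq[OF j] by simp
  also have "\<dots> \<le> psi j (\<lambda>i. P i q / q)" using psi_ge_F[OF j q] by (simp add: k_def)
  finally show ?thesis by (simp add: k_def)
qed

lemma psi_atF:
  assumes j: "j \<le> n"
  shows "psi j (\<lambda>i. P i (tau (k * NN + n)) / tau (k * NN + n)) \<le> psi j (a k) + A n / (real k + 1)"
proof -
  have "psi j (\<lambda>i. P i (tau (k * NN + n)) / tau (k * NN + n)) = val j (k * NN + n)"
    by (rule psi_P_tau[OF j])
  also have "\<dots> = (A j + (real k + 1) * psi j (a k)) / (A n + (real k + 1))" using valF_eq[OF j] by simp
  also have "\<dots> \<le> psi j (a k) + A n / (real k + 1)"
    by (rule bnd_up) (use A_nonneg A_mono[OF j] psi_a_ge0 in auto)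
  finally show ?thesis .
qed

lemma psi_atE:
  assumes j: "j \<le> n"
  shows "psi j (\<lambda>i. P i (tau (k * NN)) / tau (k * NN)) = real j / real n"
  using psi_P_tau[OF j] val_epoch[OF j] by simp

lemma tau_big: "real k \<le> tau (k * NN + p)"
  using tau_epoch[of k] tau_le[of "k * NN" "k * NN + p"] by simp

lemma idx_big: assumes "tau (K * NN) \<le> q" shows "K \<le> idx q div NN"
proof -
  have "K * NN \<le> idx q" by (rule idx_mono_tau[OF assms])
  then show ?thesis using NN_pos by (simp add: less_eq_div_iff_mult_less_eq)
qed


lemma main_limits:
  assumes j: "j \<in> {1..n}"
    and M1: "\<And>k. M \<le> psi j (a k)"
    and M2: "\<And>K. \<exists>k\<ge>K. psi j (a k) < M + 1 / (real k + 1)"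
  shows "Liminf at_top (\<lambda>q. ereal (psi j (\<lambda>i. P i q / q))) = ereal M \<and>
         Limsup at_top (\<lambda>q. ereal (psi j (\<lambda>i. P i q / q))) = ereal (real j / real n)"
proof -
  define f where "f q = psi j (\<lambda>i. P i q / q)" for q
  have jn: "j \<le> n" using j by simp
  define C where "C = A n"
  have C0: "C \<ge> 0" unfolding C_def by (rule A_nonneg)
  have up: "f q \<le> real j / real n" if "1 \<le> q" for q
    unfolding f_def by (rule psi_upper[OF jn that])
  have low: "f q \<ge> M - C / (real (idx q div NN) + 1)" if "1 \<le> q" for q
    using psi_low[OF jn that] M1[of "idx q div NN"] unfolding f_def C_def by linarith
  have atE: "f (tau (k * NN)) = real j / real n" for k
    unfolding f_def by (rule psi_atE[OF jn])
  have atF: "f (tau (k * NN + n)) \<le> psi j (a k) + C / (real k + 1)" for k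
    unfolding f_def C_def by (rule psi_atF[OF jn])
  have tau0': "real k \<le> tau (k * NN)" for k using tau_big[of k 0] by simp
  have ls1: "Limsup at_top (\<lambda>q. ereal (f q)) \<le> ereal (real j / real n)"
    unfolding Limsup_le_iff
  proof (intro allI impI)
    fix y assume y: "y > ereal (real j / real n)"
    show "\<forall>\<^sub>F q in at_top. ereal (f q) < y"
      unfolding eventually_at_top_linorder
    proof (intro exI[of _ 1] allI impI)
      fix q :: real assume "1 \<le> q"
      then have "ereal (f q) \<le> ereal (real j / real n)" using up by simp
      then show "ereal (f q) < y" using y by (rule le_less_trans)
    qed
  qed
  have ls2: "ereal (real j / real n) \<le> Limsup at_top (\<lambda>q. ereal (f q))"
  proof (rule ccontr)
    assume "\<not> ?thesis"
    then have "Limsup at_top (\<lambda>q. ereal (f q)) < ereal (real j / real n)" by simp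
    then have "\<forall>\<^sub>F q in at_top. ereal (f q) < ereal (real j / real n)" by (rule Limsup_lessD)
    then obtain Q where Q: "\<And>q. q \<ge> Q \<Longrightarrow> f q < real j / real n"
      unfolding eventually_at_top_linorder by auto
    obtain k :: nat where "Q \<le> real k" using real_arch_simple by blast
    then have "f (tau (k * NN)) < real j / real n" using Q tau0'[of k] by simp
    then show False using atE by simp
  qed
  have li1: "ereal M \<le> Liminf at_top (\<lambda>q. ereal (f q))"
    unfolding le_Liminf_iff
  proof (intro allI impI)
    fix y assume y: "y < ereal M"
    obtain r where r: "y < ereal r" "ereal r < ereal M" using ereal_dense2[OF y] by blast
    have rM: "r < M" using r by simp
    obtain K :: nat where K: "C / (M - r) \<le> real K" using real_arch_simple by blast
    have CK: "C / (real K + 1) < M - r"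
    proof -
      have "C \<le> (M - r) * real K" using K rM by (simp add: divide_le_eq mult.commute)
      also have "\<dots> < (M - r) * (real K + 1)" using rM by simp
      finally show ?thesis by (simp add: divide_less_eq mult.commute)
    qed
    show "\<forall>\<^sub>F q in at_top. y < ereal (f q)"
      unfolding eventually_at_top_linorder
    proof (intro exI[of _ "max 1 (tau (K * NN))"] allI impI)
      fix q assume q: "max 1 (tau (K * NN)) \<le> q"
      have q1: "1 \<le> q" using q by simp
      define k where "k = idx q div NN"
      have kK: "K \<le> k" unfolding k_def by (rule idx_big) (use q in simp)
      have "C / (real k + 1) \<le> C / (real K + 1)" using kK C0 by (intro divide_left_mono) auto
      then have "r < f q" using low[OF q1] CK unfolding k_def by linarith
      then show "y < ereal (f q)" using r(1) by (meson ereal_less_eq(3) less_le_trans less_imp_le not_le)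
    qed
  qed
  have li2: "Liminf at_top (\<lambda>q. ereal (f q)) \<le> ereal M"
  proof (rule ccontr)
    assume "\<not> ?thesis"
    then have "ereal M < Liminf at_top (\<lambda>q. ereal (f q))" by simp
    then obtain r where r: "ereal M < ereal r" "ereal r < Liminf at_top (\<lambda>q. ereal (f q))"
      using ereal_dense2 by blast
    have rM: "M < r" using r by simp
    have "\<forall>\<^sub>F q in at_top. ereal r < ereal (f q)" by (rule less_LiminfD[OF r(2)])
    then obtain Q where Q: "\<And>q. q \<ge> Q \<Longrightarrow> r < f q"
      unfolding eventually_at_top_linorder by auto
    obtain K :: nat where K: "max Q ((1 + C) / (r - M)) \<le> real K" using real_arch_simple by blast
    obtain k where k: "K \<le> k" "psi j (a k) < M + 1 / (real k + 1)" using M2[of K] by blast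
    have "(1 + C) \<le> (r - M) * real K" using K rM by (simp add: divide_le_eq mult.commute)
    also have "\<dots> < (r - M) * (real k + 1)" using rM k(1) by simp
    finally have "(1 + C) / (real k + 1) < r - M" by (simp add: divide_less_eq mult.commute)
    then have "1 / (real k + 1) + C / (real k + 1) < r - M" by (simp add: add_divide_distrib)
    then have lt: "f (tau (k * NN + n)) < r" using atF[of k] k(2) by linarith
    have "Q \<le> tau (k * NN + n)" using K k(1) tau_big[of k n] by simp
    then show False using Q lt by fastforce
  qed
  show ?thesis using li1 li2 ls1 ls2 unfolding f_def by (simp add: order_antisym)
qed

end

lemma closedDelta_psi_nonneg:
  assumes n2: "n \<ge> 2" and e: "e \<in> closedDelta n"
  shows "0 \<le> psi j e"
proof -
  have "constr n (\<lambda>_. e)" using n2 e by unfold_locales auto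
  then show ?thesis using constr.psi_a_ge0[of n "\<lambda>_. e" j 0] by simp
qed

theorem mainTheorem10:
  fixes n :: nat and E :: "(nat \<Rightarrow> real) set"
  assumes "n \<ge> 2" and "E \<noteq> {}" and "E \<subseteq> closedDelta n"
  shows "\<exists>P. gen_n_system n {1..} P \<and>
    (\<forall>j\<in>{1..n}.
       Liminf at_top (\<lambda>q. ereal (psi j (\<lambda>i. P i q / q))) = ereal (Inf (psi j ` E)) \<and>
       Limsup at_top (\<lambda>q. ereal (psi j (\<lambda>i. P i q / q))) = ereal (real j / real n))"
proof -
  note n2 = assms(1) and En = assms(2) and ED = assms(3)
  define mI where "mI j = Inf (psi j ` E)" for j
  have bdd: "bdd_below (psi j ` E)" for j
    using closedDelta_psi_nonneg[OF n2] ED by (intro bdd_belowI[of _ 0]) auto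
  have ex: "\<exists>e. e \<in> E \<and> psi (k mod n + 1) e < mI (k mod n + 1) + 1 / (real k + 1)" for k
  proof -
    have ne: "psi (k mod n + 1) ` E \<noteq> {}" using En by simp
    have lt: "Inf (psi (k mod n + 1) ` E) < mI (k mod n + 1) + 1 / (real k + 1)"
      unfolding mI_def by simp
    obtain v where v: "v \<in> psi (k mod n + 1) ` E" "v < mI (k mod n + 1) + 1 / (real k + 1)"
      using cInf_lessD[OF ne lt] by blast
    then obtain e where "e \<in> E" "v = psi (k mod n + 1) e" by blast
    then show ?thesis using v(2) by blast
  qed
  define a where "a k = (SOME e. e \<in> E \<and> psi (k mod n + 1) e < mI (k mod n + 1) + 1 / (real k + 1))" for k
  have a: "a k \<in> E \<and> psi (k mod n + 1) (a k) < mI (k mod n + 1) + 1 / (real k + 1)" for k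
    unfolding a_def by (rule someI_ex[OF ex])
  have aE: "a k \<in> closedDelta n" for k using a[of k] ED by blast
  interpret constr n a by (rule constr.intro[OF n2 aE])
  show ?thesis
  proof (intro exI[of _ P] conjI ballI)
    show "gen_n_system n {1..} P" by (rule gen)
  next
    fix j assume j: "j \<in> {1..n}"
    have M1: "mI j \<le> psi j (a k)" for k
      unfolding mI_def using a[of k] bdd[of j] by (intro cInf_lower) auto
    have M2: "\<exists>k\<ge>K. psi j (a k) < mI j + 1 / (real k + 1)" for K
    proof -
      obtain jj where jj: "j = Suc jj" using j by (cases j) auto
      define k where "k = n * K + jj"
      have jl: "jj < n" using j jj by simp
      have "k mod n = jj mod n" unfolding k_def by (rule mod_mult_self4)
      then have km: "k mod n + 1 = j" using jl jj by simp
      have "1 * K \<le> n * K" using n2 by (intro mult_le_mono1) simp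
      then have "K \<le> n * K" by simp
      then have "K \<le> k" unfolding k_def by (rule trans_le_add1)
      then show ?thesis using a[of k] km by auto
    qed
    have "Liminf at_top (\<lambda>q. ereal (psi j (\<lambda>i. P i q / q))) = ereal (mI j) \<and>
         Limsup at_top (\<lambda>q. ereal (psi j (\<lambda>i. P i q / q))) = ereal (real j / real n)"
      by (rule main_limits[OF j M1 M2])
    then show "Liminf at_top (\<lambda>q. ereal (psi j (\<lambda>i. P i q / q))) = ereal (Inf (psi j ` E))"
      "Limsup at_top (\<lambda>q. ereal (psi j (\<lambda>i. P i q / q))) = ereal (real j / real n)"
      unfolding mI_def by simp_all
  qed
qed

end
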